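(* Let $G$ be a finite connected graph with a real structure. Then $s(G)\equiv g(G)+1 \pmod 2$ and $0\le s(G)\le g(G)+1$; moreover $s(G)\neq g(G)+1$ if $a(G)=1$, and $s(G)\neq 0$ if $a(G)=0$.
   Context: A finite graph $G$ consists of a finite vertex set $V(G)$, a finite edge set $E(G)$ and an incidence function $\psi$ assigning to each edge $e$ a set $\psi(e)\subset V(G)$ of one or two vertices (its ends); loops ($|\psi(e)|=1$) and multiple edges are allowed. A walk is a sequence $v_0e_0v_1\cdots e_{n-1}v_n$ with $\psi(e_i)=\{v_i,v_{i+1}\}$; $G$ is connected if any two vertices are joined by a walk. The genus of a graph $H$ is $g(H)=c(H)+|E(H)|-|V(H)|$, where $c(H)$ is its number of connected components. A real structure on $G$ is a pair of involutions $\iota_V$ of $V(G)$ and $\iota_E$ of $E(G)$ with $\psi(\iota_E(e))=\iota_V(\psi(e))$ for all $e$; write $\overline v=\iota_V(v)$, $\overline e=\iota_E(e)$. A vertex $v$ is real if $\overline v=v$; $V_{\mathbb R}(G)$ is the set of real vertices. An edge $e$ is real if $\overline e=e$; a real edge is isolated if $\psi(e)\not\subset V_{\mathbb R}(G)$ and non-isolated otherwise. The real locus graph $G(\mathbb R)$ is the subgraph with vertex set $V_{\mathbb R}(G)$ and edge set the non-isolated real edges. Let $e^i(G)$ be the number of isolated real edges and $G(\mathbb R)_1,\dots,G(\mathbb R)_{s'}$ the connected components of $G(\mathbb R)$ (possibly $s'=0$). Define $s(G)=e^i(G)+\sum_{i=1}^{s'}\bigl(g(G(\mathbb R)_i)+1\bigr)$.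 Define $a(G)=1$ if there exist a non-real vertex $v$ and a walk in $G$ with ends $v$ and $\overline v$ containing neither a real vertex nor a real edge; otherwise $a(G)=0$. *)

theory Defs
  imports Main
begin

record ('v, 'e) graph =
  verts :: "'v set"
  edges :: "'e set"
  inc   :: "'e \<Rightarrow> 'v set"

definition is_graph :: "('v, 'e) graph \<Rightarrow> bool" where
  "is_graph G \<longleftrightarrow> finite (verts G) \<and> finite (edges G) \<and>
     (\<forall>e\<in>edges G. inc G e \<subseteq> verts G \<and> (card (inc G e) = 1 \<or> card (inc G e) = 2))"

definition is_walk :: "('v, 'e) graph \<Rightarrow> 'v list \<Rightarrow> 'e list \<Rightarrow> bool" where
  "is_walk G vs es \<longleftrightarrow> length vs = Suc (length es) \<and> set vs \<subseteq> verts G \<and> set es \<subseteq> edges G \<and>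
     (\<forall>i<length es. inc G (es ! i) = {vs ! i, vs ! Suc i})"

definition joined :: "('v, 'e) graph \<Rightarrow> 'v \<Rightarrow> 'v \<Rightarrow> bool" where
  "joined G u v \<longleftrightarrow> (\<exists>vs es. is_walk G vs es \<and> hd vs = u \<and> last vs = v)"

definition connected_graph :: "('v, 'e) graph \<Rightarrow> bool" where
  "connected_graph G \<longleftrightarrow> verts G \<noteq> {} \<and> (\<forall>u\<in>verts G. \<forall>v\<in>verts G. joined G u v)"

definition components :: "('v, 'e) graph \<Rightarrow> 'v set set" where
  "components G = (\<lambda>u. {v\<in>verts G. joined G u v}) ` verts G"

definition comp_subgraph :: "('v, 'e) graph \<Rightarrow> 'v set \<Rightarrow> ('v, 'e) graph" where
  "comp_subgraph G C = \<lparr>verts = C, edges = {e\<in>edges G. inc G e \<subseteq> C}, inc = inc G\<rparr>"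

definition genus :: "('v, 'e) graph \<Rightarrow> int" where
  "genus H = int (card (components H)) + int (card (edges H)) - int (card (verts H))"

definition real_structure :: "('v, 'e) graph \<Rightarrow> ('v \<Rightarrow> 'v) \<Rightarrow> ('e \<Rightarrow> 'e) \<Rightarrow> bool" where
  "real_structure G iV iE \<longleftrightarrow>
     (\<forall>v\<in>verts G. iV v \<in> verts G \<and> iV (iV v) = v) \<and>
     (\<forall>e\<in>edges G. iE e \<in> edges G \<and> iE (iE e) = e) \<and>
     (\<forall>e\<in>edges G. inc G (iE e) = iV ` inc G e)"

definition real_verts :: "('v, 'e) graph \<Rightarrow> ('v \<Rightarrow> 'v) \<Rightarrow> 'v set" where
  "real_verts G iV = {v\<in>verts G. iV v = v}"

definition isolated_real_edges :: "('v, 'e) graph \<Rightarrow> ('v \<Rightarrow> 'v) \<Rightarrow> ('e \<Rightarrow> 'e) \<Rightarrow> 'e set" where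
  "isolated_real_edges G iV iE = {e\<in>edges G. iE e = e \<and> \<not> inc G e \<subseteq> real_verts G iV}"

definition real_locus :: "('v, 'e) graph \<Rightarrow> ('v \<Rightarrow> 'v) \<Rightarrow> ('e \<Rightarrow> 'e) \<Rightarrow> ('v, 'e) graph" where
  "real_locus G iV iE = \<lparr>verts = real_verts G iV,
      edges = {e\<in>edges G. iE e = e \<and> inc G e \<subseteq> real_verts G iV}, inc = inc G\<rparr>"

definition s_inv :: "('v, 'e) graph \<Rightarrow> ('v \<Rightarrow> 'v) \<Rightarrow> ('e \<Rightarrow> 'e) \<Rightarrow> int" where
  "s_inv G iV iE = int (card (isolated_real_edges G iV iE)) +
     (\<Sum>C\<in>components (real_locus G iV iE). genus (comp_subgraph (real_locus G iV iE) C) + 1)"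

definition a_inv :: "('v, 'e) graph \<Rightarrow> ('v \<Rightarrow> 'v) \<Rightarrow> ('e \<Rightarrow> 'e) \<Rightarrow> nat" where
  "a_inv G iV iE = (if (\<exists>v\<in>verts G. iV v \<noteq> v \<and> (\<exists>vs es. is_walk G vs es \<and> hd vs = v \<and> last vs = iV v \<and>
        (\<forall>u\<in>set vs. iV u \<noteq> u) \<and> (\<forall>e\<in>set es. iE e \<noteq> e))) then 1 else 0)"

end

theory Submission
  imports Defs
begin


definition adjR :: "('v,'e) graph \<Rightarrow> 'e set \<Rightarrow> ('v\<times>'v) set" where
  "adjR G F = {(x,y). \<exists>e\<in>F. inc G e = {x,y}}"

definition cls :: "'v set \<Rightarrow> ('v\<times>'v) set \<Rightarrow> 'v set set" where
  "cls V R = (\<lambda>u. R\<^sup>* `` {u}) ` V"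

lemma adjR_mono: "F \<subseteq> F' \<Longrightarrow> adjR G F \<subseteq> adjR G F'"
  unfolding adjR_def by blast

lemma adjR_Un: "adjR G (F \<union> F') = adjR G F \<union> adjR G F'"
  unfolding adjR_def by blast

lemma adjR_sym: "(x,y) \<in> adjR G F \<Longrightarrow> (y,x) \<in> adjR G F"
  unfolding adjR_def by (auto simp: insert_commute)

lemma sym_adjR: "sym (adjR G F)"
  by (meson adjR_sym symI)

lemma walk_adj: "is_walk G vs es \<Longrightarrow> (hd vs, last vs) \<in> (adjR G (set es))\<^sup>*"
proof (induction es arbitrary: vs)
  case Nil
  then obtain x where "vs = [x]" unfolding is_walk_def by (cases vs) auto
  then show ?case by simp
next
  case (Cons e es)
  then obtain x vs' where vs: "vs = x # vs'" unfolding is_walk_def by (cases vs) auto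
  have len: "length vs' = Suc (length es)" using Cons.prems vs unfolding is_walk_def by simp
  have w': "is_walk G vs' es" using Cons.prems vs unfolding is_walk_def
    by (auto simp: nth_Cons_Suc)
  have ie: "inc G e = {x, vs' ! 0}" using Cons.prems vs unfolding is_walk_def
    by (metis length_Cons nth_Cons_0 nth_Cons_Suc zero_less_Suc list.size(4) One_nat_def)
  have "vs' \<noteq> []" using len by auto
  then have h: "vs' ! 0 = hd vs'" by (simp add: hd_conv_nth)
  have "(x, hd vs') \<in> adjR G (set (e#es))" using ie h unfolding adjR_def by auto
  moreover have "(hd vs', last vs') \<in> (adjR G (set (e#es)))\<^sup>*"
    using Cons.IH[OF w'] rtrancl_mono[OF adjR_mono[of "set es" "set (e#es)"]] by auto
  ultimately show ?case using vs \<open>vs' \<noteq> []\<close> by (auto intro: converse_rtrancl_into_rtrancl)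
qed

lemma adj_walk:
  assumes "(u,v) \<in> (adjR G F)\<^sup>*" "u \<in> verts G" "F \<subseteq> edges G" "\<forall>e\<in>F. inc G e \<subseteq> verts G"
  shows "\<exists>vs es. is_walk G vs es \<and> hd vs = u \<and> last vs = v \<and> set es \<subseteq> F"
  using assms(1)
proof (induction rule: rtrancl_induct)
  case base
  then show ?case using assms(2) by (intro exI[of _ "[u]"] exI[of _ "[]"]) (auto simp: is_walk_def)
next
  case (step v w)
  then obtain vs es where w: "is_walk G vs es" "hd vs = u" "last vs = v" "set es \<subseteq> F" by blast
  from step obtain e where e: "e \<in> F" "inc G e = {v,w}" unfolding adjR_def by auto
  have len: "length vs = Suc (length es)" using w unfolding is_walk_def by simp
  have lv: "vs ! length es = v" using w(3) len
    by (metis diff_Suc_1 last_conv_nth list.size(3) nat.distinct(1))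
  have wv: "w \<in> verts G" using e assms(4) by auto
  have "is_walk G (vs @ [w]) (es @ [e])"
    unfolding is_walk_def
  proof (intro conjI allI impI)
    show "length (vs @ [w]) = Suc (length (es @ [e]))" using len by simp
    show "set (vs @ [w]) \<subseteq> verts G" using w(1) wv unfolding is_walk_def by auto
    show "set (es @ [e]) \<subseteq> edges G" using w(1) e assms(3) unfolding is_walk_def by auto
    fix i assume i: "i < length (es @ [e])"
    show "inc G ((es @ [e]) ! i) = {(vs @ [w]) ! i, (vs @ [w]) ! Suc i}"
    proof (cases "i < length es")
      case True
      then show ?thesis using w(1) len unfolding is_walk_def by (simp add: nth_append)
    next
      case False
      then have "i = length es" using i by simp
      then show ?thesis using e lv len by (simp add: nth_append)
    qed
  qed
  moreover have "hd (vs @ [w]) = u" using w(2) len by (cases vs) auto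
  ultimately show ?case using w(4) e(1) by (intro exI[of _ "vs @ [w]"] exI[of _ "es @ [e]"]) auto
qed

lemma joined_iff:
  assumes "\<forall>e\<in>edges G. inc G e \<subseteq> verts G"
  shows "joined G u v \<longleftrightarrow> u \<in> verts G \<and> (u,v) \<in> (adjR G (edges G))\<^sup>*"
proof
  assume "joined G u v"
  then obtain vs es where w: "is_walk G vs es" "hd vs = u" "last vs = v" unfolding joined_def by blast
  have "vs \<noteq> []" using w(1) unfolding is_walk_def by auto
  then have "u \<in> verts G" using w unfolding is_walk_def by auto
  moreover have "(u,v) \<in> (adjR G (set es))\<^sup>*" using walk_adj[OF w(1)] w by simp
  moreover have "set es \<subseteq> edges G" using w(1) unfolding is_walk_def by simp
  ultimately show "u \<in> verts G \<and> (u,v) \<in> (adjR G (edges G))\<^sup>*"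
    using rtrancl_mono[OF adjR_mono] by blast
next
  assume "u \<in> verts G \<and> (u,v) \<in> (adjR G (edges G))\<^sup>*"
  then show "joined G u v" unfolding joined_def using adj_walk[OF _ _ _ assms] by blast
qed



lemma cls_sub: "R \<subseteq> V \<times> V \<Longrightarrow> u \<in> V \<Longrightarrow> R\<^sup>* `` {u} \<subseteq> V"
proof
  fix w assume "R \<subseteq> V \<times> V" "u \<in> V" "w \<in> R\<^sup>* `` {u}"
  then have "(u,w) \<in> R\<^sup>*" by simp
  then show "w \<in> V" using \<open>R \<subseteq> V \<times> V\<close> \<open>u \<in> V\<close> by (induction rule: rtrancl_induct) auto
qed

lemma cls_same: assumes "sym R" "(u,w) \<in> R\<^sup>*" shows "R\<^sup>* `` {w} = R\<^sup>* `` {u}"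
proof -
  have wu: "(w,u) \<in> R\<^sup>*" using symD[OF sym_rtrancl[OF assms(1)] assms(2)] .
  show ?thesis
  proof (intro equalityI subsetI)
    fix x assume "x \<in> R\<^sup>* `` {w}" then have "(w,x) \<in> R\<^sup>*" by simp
    then have "(u,x) \<in> R\<^sup>*" using assms(2) by (rule rtrancl_trans[rotated])
    then show "x \<in> R\<^sup>* `` {u}" by simp
  next
    fix x assume "x \<in> R\<^sup>* `` {u}" then have "(u,x) \<in> R\<^sup>*" by simp
    then have "(w,x) \<in> R\<^sup>*" using wu by (rule rtrancl_trans[rotated])
    then show "x \<in> R\<^sup>* `` {w}" by simp
  qed
qed

lemma cls_meet: "sym R \<Longrightarrow> x \<in> R\<^sup>* `` {u} \<Longrightarrow> x \<in> R\<^sup>* `` {w} \<Longrightarrow> R\<^sup>* `` {u} = R\<^sup>* `` {w}"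
  by (metis Image_singleton_iff cls_same)

lemma finite_cls: "finite V \<Longrightarrow> finite (cls V R)"
  unfolding cls_def by simp

lemma cls_add_pair:
  assumes fin: "finite V" and RV: "R \<subseteq> V \<times> V" and sR: "sym R" and a: "a \<in> V" and b: "b \<in> V"
  shows "card (cls V R) \<le> card (cls V (R \<union> {(a,b),(b,a)})) + 1"
proof -
  define R' where "R' = R \<union> {(a,b),(b,a)}"
  define Ca where "Ca = R\<^sup>* `` {a}"
  define Cb where "Cb = R\<^sup>* `` {b}"
  define D where "D = Ca \<union> Cb"
  have aCa: "a \<in> Ca" "b \<in> Cb" unfolding Ca_def Cb_def by auto
  have R'eq: "R'\<^sup>* = R\<^sup>* \<union> D \<times> D"
  proof
    show "R'\<^sup>* \<subseteq> R\<^sup>* \<union> D \<times> D"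
    proof
      fix p assume "p \<in> R'\<^sup>*"
      then obtain x y where p: "p = (x,y)" "(x,y) \<in> R'\<^sup>*" by (cases p) auto
      from p(2) have "(x,y) \<in> R\<^sup>* \<union> D \<times> D"
      proof (induction rule: rtrancl_induct)
        case base then show ?case by simp
      next
        case (step y z)
        show ?case
        proof (cases "(y,z) \<in> R")
          case True
          from step.IH show ?thesis
          proof
            assume "(x,y) \<in> R\<^sup>*"
            then have "(x,z) \<in> R\<^sup>*" using True by (rule rtrancl_into_rtrancl)
            then show ?thesis by simp
          next
            assume "(x,y) \<in> D \<times> D"
            then have "y \<in> D" "x \<in> D" by auto
            have "(a,y) \<in> R\<^sup>* \<or> (b,y) \<in> R\<^sup>*" using \<open>y \<in> D\<close> unfolding D_def Ca_def Cb_def by simp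
            then have "(a,z) \<in> R\<^sup>* \<or> (b,z) \<in> R\<^sup>*"
              by (rule disjE) (simp_all add: rtrancl_into_rtrancl[OF _ True])
            then have "z \<in> D" unfolding D_def Ca_def Cb_def by simp
            then show ?thesis using \<open>x \<in> D\<close> by auto
          qed
        next
          case False
          then have yz: "y \<in> D" "z \<in> D" using step(2) aCa unfolding R'_def D_def by auto
          from step.IH show ?thesis
          proof
            assume "(x,y) \<in> R\<^sup>*"
            then have yx: "(y,x) \<in> R\<^sup>*" by (rule symD[OF sym_rtrancl[OF sR]])
            have "(a,y) \<in> R\<^sup>* \<or> (b,y) \<in> R\<^sup>*" using yz(1) unfolding D_def Ca_def Cb_def by simp
            then have "(a,x) \<in> R\<^sup>* \<or> (b,x) \<in> R\<^sup>*"
              by (rule disjE) (simp_all add: rtrancl_trans[OF _ yx])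
            then have "x \<in> D" unfolding D_def Ca_def Cb_def by simp
            then show ?thesis using yz by auto
          next
            assume "(x,y) \<in> D \<times> D" then show ?thesis using yz by auto
          qed
        qed
      qed
      then show "p \<in> R\<^sup>* \<union> D \<times> D" using p by simp
    qed
  next
    show "R\<^sup>* \<union> D \<times> D \<subseteq> R'\<^sup>*"
    proof
      fix p assume "p \<in> R\<^sup>* \<union> D \<times> D"
      obtain x y where p: "p = (x,y)" by (cases p)
      have pxy: "(x,y) \<in> R\<^sup>* \<union> D \<times> D" using p \<open>p \<in> R\<^sup>* \<union> D \<times> D\<close> by simp
      have RR': "R\<^sup>* \<subseteq> R'\<^sup>*" unfolding R'_def by (rule rtrancl_mono) (rule Un_upper1)
      have ab: "(a,b) \<in> R'\<^sup>*" "(b,a) \<in> R'\<^sup>*" unfolding R'_def by (simp_all add: r_into_rtrancl)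
      have s2: "sym {(a,b),(b,a)}" by (simp add: sym_def)
      have sR': "sym (R'\<^sup>*)" unfolding R'_def by (intro sym_rtrancl sym_Un sR s2)
      have toA: "(z,a) \<in> R'\<^sup>*" if "z \<in> D" for z
      proof -
        from that have "(a,z) \<in> R\<^sup>* \<or> (b,z) \<in> R\<^sup>*" unfolding D_def Ca_def Cb_def by auto
        then have "(a,z) \<in> R'\<^sup>*"
        proof
          assume "(a,z) \<in> R\<^sup>*" then show ?thesis using RR' by (rule subsetD[rotated])
        next
          assume "(b,z) \<in> R\<^sup>*" then have "(b,z) \<in> R'\<^sup>*" using RR' by (rule subsetD[rotated])
          then show ?thesis by (rule rtrancl_trans[OF ab(1)])
        qed
        then show ?thesis using sR' by (rule symD[rotated])
      qed
      have "(x,y) \<in> R'\<^sup>*"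
        using pxy
      proof
        assume "(x,y) \<in> R\<^sup>*" then show ?thesis using RR' by (rule subsetD[rotated])
      next
        assume "(x,y) \<in> D \<times> D"
        then have "(x,a) \<in> R'\<^sup>*" "(y,a) \<in> R'\<^sup>*" using toA by auto
        then have "(a,y) \<in> R'\<^sup>*" using symD[OF sR'] by simp
        then show ?thesis by (rule rtrancl_trans[OF \<open>(x,a) \<in> R'\<^sup>*\<close>])
      qed
      then show "p \<in> R'\<^sup>*" using p by simp
    qed
  qed
  define \<phi> where "\<phi> C = (if C \<inter> D = {} then C else D)" for C
  have disjD: "R\<^sup>* `` {u} \<inter> D = {} \<longleftrightarrow> u \<notin> D" for u
  proof
    assume "R\<^sup>* `` {u} \<inter> D = {}" then show "u \<notin> D" by auto
  next
    assume "u \<notin> D"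
    show "R\<^sup>* `` {u} \<inter> D = {}"
    proof (rule ccontr)
      assume "R\<^sup>* `` {u} \<inter> D \<noteq> {}"
      then obtain x where x: "x \<in> R\<^sup>* `` {u}" "x \<in> D" by auto
      then have "x \<in> Ca \<or> x \<in> Cb" unfolding D_def by auto
      then have "R\<^sup>* `` {u} = Ca \<or> R\<^sup>* `` {u} = Cb"
        using cls_meet[OF sR x(1)] unfolding Ca_def Cb_def by blast
      then show False using \<open>u \<notin> D\<close> unfolding D_def by auto
    qed
  qed
  have phi_eq: "\<phi> (R\<^sup>* `` {u}) = R'\<^sup>* `` {u}" for u
  proof (cases "u \<in> D")
    case True
    have "R\<^sup>* `` {u} \<subseteq> D"
    proof -
      have "u \<in> Ca \<or> u \<in> Cb" using True unfolding D_def by auto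
      then have "R\<^sup>* `` {u} = Ca \<or> R\<^sup>* `` {u} = Cb"
        unfolding Ca_def Cb_def using cls_same[OF sR] by auto
      then show ?thesis unfolding D_def by auto
    qed
    then show ?thesis using True disjD[of u] unfolding \<phi>_def R'eq by auto
  next
    case False
    then show ?thesis using disjD[of u] unfolding \<phi>_def R'eq by auto
  qed
  have img: "\<phi> ` cls V R = cls V R'" unfolding cls_def image_image phi_eq by simp
  have inj: "inj_on \<phi> (cls V R - {Ca})"
  proof (rule inj_onI)
    fix C1 C2 assume C1: "C1 \<in> cls V R - {Ca}" and C2: "C2 \<in> cls V R - {Ca}" and eq: "\<phi> C1 = \<phi> C2"
    have meet: "C \<inter> D \<noteq> {} \<Longrightarrow> C = Cb" if "C \<in> cls V R - {Ca}" for C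
    proof -
      assume "C \<inter> D \<noteq> {}"
      from that obtain u where u: "C = R\<^sup>* `` {u}" "C \<noteq> Ca" unfolding cls_def by auto
      then obtain x where x: "x \<in> R\<^sup>* `` {u}" "x \<in> Ca \<or> x \<in> Cb" using \<open>C \<inter> D \<noteq> {}\<close> unfolding D_def by auto
      then show "C = Cb" using u cls_meet[OF sR x(1)] unfolding Ca_def Cb_def by blast
    qed
    have aD: "a \<in> D" using aCa unfolding D_def by auto
    have CaD: "Ca \<inter> C = {}" if "C \<in> cls V R - {Ca}" for C
    proof (rule ccontr)
      assume "Ca \<inter> C \<noteq> {}"
      from that obtain u where u: "C = R\<^sup>* `` {u}" "C \<noteq> Ca" unfolding cls_def by auto
      obtain x where "x \<in> Ca" "x \<in> C" using \<open>Ca \<inter> C \<noteq> {}\<close> by auto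
      then show False using u cls_meet[OF sR] unfolding Ca_def by metis
    qed
    show "C1 = C2"
    proof (cases "C1 \<inter> D = {}")
      case True note T1 = True
      show ?thesis
      proof (cases "C2 \<inter> D = {}")
        case True then show ?thesis using T1 eq unfolding \<phi>_def by simp
      next
        case False
        then have "C1 = D" using T1 eq unfolding \<phi>_def by simp
        then show ?thesis using T1 aD by auto
      qed
    next
      case False note F1 = False
      show ?thesis
      proof (cases "C2 \<inter> D = {}")
        case True
        then have "C2 = D" using F1 eq unfolding \<phi>_def by simp
        then show ?thesis using True aD by auto
      next
        case False then show ?thesis using F1 meet C1 C2 by blast
      qed
    qed
  qed
  have fc: "finite (cls V R)" using fin by (rule finite_cls)
  have c1: "card (cls V R) \<le> card (cls V R - {Ca}) + 1"
    by (cases "Ca \<in> cls V R") (auto simp: card_Diff_singleton fc)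
  have c2: "card (cls V R - {Ca}) = card (\<phi> ` (cls V R - {Ca}))"
    using inj by (simp add: card_image)
  have c3: "card (\<phi> ` (cls V R - {Ca})) \<le> card (cls V R')"
    using img fc by (intro card_mono) (auto simp: finite_cls fin)
  show ?thesis using c1 c2 c3 unfolding R'_def by linarith
qed

lemma two_ends: "card S = 1 \<or> card S = 2 \<Longrightarrow> \<exists>a b. S = {a,b}"
proof -
  assume "card S = 1 \<or> card S = 2"
  then show ?thesis
  proof
    assume "card S = 1" then obtain x where "S = {x}" by (auto simp: card_1_singleton_iff)
    then show ?thesis by blast
  next
    assume "card S = 2" then show ?thesis by (auto simp: card_2_iff)
  qed
qed

lemma adjR_single: "inc G e = {a,b} \<Longrightarrow> adjR G {e} = {(a,b),(b,a)}"
  unfolding adjR_def by (auto simp: doubleton_eq_iff)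

lemma adjR_sub: "\<forall>e\<in>F. inc G e \<subseteq> V \<Longrightarrow> adjR G F \<subseteq> V \<times> V"
  unfolding adjR_def by auto

lemma cls_add_edges:
  assumes "finite F" "finite V" "R \<subseteq> V \<times> V" "sym R"
    "\<forall>e\<in>F. inc G e \<subseteq> V \<and> (card (inc G e) = 1 \<or> card (inc G e) = 2)"
  shows "card (cls V R) \<le> card (cls V (R \<union> adjR G F)) + card F"
  using assms(1,5)
proof (induction F rule: finite_induct)
  case empty
  then show ?case by (simp add: adjR_def)
next
  case (insert e F)
  obtain a b where ab: "inc G e = {a,b}" using two_ends insert.prems by blast
  have abV: "a \<in> V" "b \<in> V" using insert.prems ab by auto
  have IH: "card (cls V R) \<le> card (cls V (R \<union> adjR G F)) + card F" using insert by auto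
  have s: "sym (R \<union> adjR G F)" using assms(4) sym_adjR by (rule sym_Un)
  have sub: "R \<union> adjR G F \<subseteq> V \<times> V" using assms(3) adjR_sub[of F G V] insert.prems by auto
  have "card (cls V (R \<union> adjR G F)) \<le> card (cls V (R \<union> adjR G F \<union> {(a,b),(b,a)})) + 1"
    by (rule cls_add_pair[OF assms(2) sub s abV])
  moreover have "R \<union> adjR G F \<union> {(a,b),(b,a)} = R \<union> adjR G (insert e F)"
    using adjR_Un[of G "{e}" F] adjR_single[OF ab] by auto
  ultimately show ?case using IH insert by simp
qed



lemma inv_rtrancl:
  assumes inv: "\<And>a b. (a,b) \<in> R \<Longrightarrow> (f a, f b) \<in> R"
    and "(x,y) \<in> R\<^sup>*"
  shows "(f x, f y) \<in> R\<^sup>*"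
  using assms(2)
proof (induction rule: rtrancl_induct)
  case base then show ?case by simp
next
  case (step y z)
  have "(f y, f z) \<in> R" using step(2) by (rule inv)
  with step.IH show ?case by (rule rtrancl_into_rtrancl)
qed
lemma cls_orbit:
  assumes fin: "finite V" and RV: "R \<subseteq> V \<times> V" and sR: "sym R"
    and iV: "\<And>x. x \<in> V \<Longrightarrow> f x \<in> V \<and> f (f x) = x"
    and inv: "\<And>x y. (x,y) \<in> R \<Longrightarrow> (f x, f y) \<in> R"
    and St: "St \<subseteq> cls V R" and stab: "\<And>C. C \<in> St \<Longrightarrow> f ` C = C"
  shows "card (cls V R) + card St \<le> 2 * card (cls V (R \<union> {(x, f x) | x. x \<in> V}))"
proof -
  define T where "T = {(x, f x) | x. x \<in> V}"
  define Q where "Q = cls V R"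
  define M where "M = cls V (R \<union> T)"
  have invR: "(f a, f b) \<in> R\<^sup>*" if "(a,b) \<in> R\<^sup>*" for a b
    using inv_rtrancl[of R f, OF inv that] .
  have img: "f ` (R\<^sup>* `` {u}) = R\<^sup>* `` {f u}" if u: "u \<in> V" for u
  proof (intro equalityI subsetI)
    fix w assume "w \<in> f ` (R\<^sup>* `` {u})"
    then obtain x where x: "(u,x) \<in> R\<^sup>*" "w = f x" by auto
    then show "w \<in> R\<^sup>* `` {f u}" using invR[OF x(1)] by simp
  next
    fix w assume "w \<in> R\<^sup>* `` {f u}"
    then have w: "(f u, w) \<in> R\<^sup>*" by simp
    have wV: "w \<in> V" using cls_sub[OF RV, of "f u"] iV[OF u] \<open>w \<in> R\<^sup>* `` {f u}\<close> by blast
    have "(f (f u), f w) \<in> R\<^sup>*" using invR[OF w] .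
    then have "(u, f w) \<in> R\<^sup>*" using iV[OF u] by simp
    moreover have "w = f (f w)" using iV[OF wV] by simp
    ultimately show "w \<in> f ` (R\<^sup>* `` {u})" by blast
  qed
  have big: "(R \<union> T)\<^sup>* `` {u} = R\<^sup>* `` {u} \<union> R\<^sup>* `` {f u}" if u: "u \<in> V" for u
  proof (intro equalityI subsetI)
    fix w assume "w \<in> (R \<union> T)\<^sup>* `` {u}"
    then have "(u,w) \<in> (R \<union> T)\<^sup>*" by simp
    then have "(u,w) \<in> R\<^sup>* \<or> (f u, w) \<in> R\<^sup>*"
    proof (induction rule: rtrancl_induct)
      case base then show ?case by simp
    next
      case (step y z)
      show ?case
      proof (cases "(y,z) \<in> R")
        case True
        from step.IH show ?thesis
        proof
          assume "(u,y) \<in> R\<^sup>*" then have "(u,z) \<in> R\<^sup>*" using True by (rule rtrancl_into_rtrancl)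
          then show ?thesis by simp
        next
          assume "(f u,y) \<in> R\<^sup>*" then have "(f u,z) \<in> R\<^sup>*" using True by (rule rtrancl_into_rtrancl)
          then show ?thesis by simp
        qed
      next
        case False
        then have "(y,z) \<in> T" using step(2) by simp
        then have z: "z = f y" "y \<in> V" unfolding T_def by auto
        from step.IH show ?thesis
        proof
          assume "(u,y) \<in> R\<^sup>*"
          then have "(f u, f y) \<in> R\<^sup>*" by (rule invR)
          then show ?thesis using z by simp
        next
          assume "(f u,y) \<in> R\<^sup>*"
          then have "(f (f u), f y) \<in> R\<^sup>*" by (rule invR)
          then show ?thesis using z iV[OF u] by simp
        qed
      qed
    qed
    then show "w \<in> R\<^sup>* `` {u} \<union> R\<^sup>* `` {f u}" by simp
  next
    fix w assume "w \<in> R\<^sup>* `` {u} \<union> R\<^sup>* `` {f u}"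
    then have "(u,w) \<in> R\<^sup>* \<or> (f u, w) \<in> R\<^sup>*" by simp
    have RT: "R\<^sup>* \<subseteq> (R \<union> T)\<^sup>*" by (rule rtrancl_mono) (rule Un_upper1)
    have uf: "(u, f u) \<in> (R \<union> T)\<^sup>*" unfolding T_def using u by (intro r_into_rtrancl) auto
    from \<open>(u,w) \<in> R\<^sup>* \<or> (f u, w) \<in> R\<^sup>*\<close> have "(u,w) \<in> (R \<union> T)\<^sup>*"
    proof
      assume "(u,w) \<in> R\<^sup>*" then show ?thesis using RT by (rule subsetD[rotated])
    next
      assume "(f u,w) \<in> R\<^sup>*" then have "(f u,w) \<in> (R \<union> T)\<^sup>*" using RT by (rule subsetD[rotated])
      then show ?thesis by (rule rtrancl_trans[OF uf])
    qed
    then show "w \<in> (R \<union> T)\<^sup>* `` {u}" by simp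
  qed
  define g where "g C = C \<union> f ` C" for C
  have g_cls: "g (R\<^sup>* `` {u}) = (R \<union> T)\<^sup>* `` {u}" if "u \<in> V" for u
    unfolding g_def using img[OF that] big[OF that] by simp
  have gQ: "g ` Q = M" unfolding Q_def M_def cls_def image_image using g_cls by simp
  define fib where "fib D = {C \<in> Q. g C = D}" for D
  have finQ: "finite Q" unfolding Q_def using fin by (rule finite_cls)
  have finM: "finite M" unfolding M_def using fin by (rule finite_cls)
  have Qun: "Q = (\<Union>D\<in>M. fib D)" unfolding fib_def using gQ by auto
  have cardQ: "card Q = (\<Sum>D\<in>M. card (fib D))"
    unfolding Qun by (rule card_UN_disjoint) (use finM finQ in \<open>auto simp: fib_def\<close>)
  have fib2: "card (fib D) \<le> 2" if D: "D \<in> M" for D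
  proof -
    obtain u where u: "u \<in> V" "D = R\<^sup>* `` {u} \<union> R\<^sup>* `` {f u}"
      using D big unfolding M_def cls_def by auto
    have "fib D \<subseteq> {R\<^sup>* `` {u}, R\<^sup>* `` {f u}}"
    proof
      fix C assume "C \<in> fib D"
      then have C: "C \<in> Q" "g C = D" unfolding fib_def by auto
      then obtain w where w: "w \<in> V" "C = R\<^sup>* `` {w}" unfolding Q_def cls_def by auto
      have "w \<in> D" using C(2) w unfolding g_def by auto
      then have "w \<in> R\<^sup>* `` {u} \<or> w \<in> R\<^sup>* `` {f u}" using u by simp
      moreover have "w \<in> R\<^sup>* `` {w}" by simp
      ultimately show "C \<in> {R\<^sup>* `` {u}, R\<^sup>* `` {f u}}"
      proof (elim disjE)
        assume h: "w \<in> R\<^sup>* `` {u}" "w \<in> R\<^sup>* `` {w}"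
        have "R\<^sup>* `` {u} = R\<^sup>* `` {w}" by (rule cls_meet[OF sR h(1) h(2)])
        then show ?thesis using w(2) by simp
      next
        assume h: "w \<in> R\<^sup>* `` {f u}" "w \<in> R\<^sup>* `` {w}"
        have "R\<^sup>* `` {f u} = R\<^sup>* `` {w}" by (rule cls_meet[OF sR h(1) h(2)])
        then show ?thesis using w(2) by simp
      qed
    qed
    then have "card (fib D) \<le> card {R\<^sup>* `` {u}, R\<^sup>* `` {f u}}" by (rule card_mono[rotated]) simp
    moreover have "card {R\<^sup>* `` {u}, R\<^sup>* `` {f u}} \<le> 2" by (simp add: card_insert_if)
    ultimately show ?thesis by linarith
  qed
  have fib1: "card (fib D) \<le> 1" if D: "D \<in> St" for D
  proof -
    have "fib D \<subseteq> {D}"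
    proof
      fix C assume "C \<in> fib D"
      then have C: "C \<in> Q" "g C = D" unfolding fib_def by auto
      then obtain w where w: "w \<in> V" "C = R\<^sup>* `` {w}" unfolding Q_def cls_def by auto
      obtain u where u: "u \<in> V" "D = R\<^sup>* `` {u}" using D St unfolding cls_def by auto
      have "w \<in> D" using C(2) w unfolding g_def by auto
      then have h: "w \<in> R\<^sup>* `` {u}" using u by simp
      have "R\<^sup>* `` {u} = R\<^sup>* `` {w}" by (rule cls_meet[OF sR h]) simp
      then show "C \<in> {D}" using w(2) u(2) by simp
    qed
    then have "card (fib D) \<le> card {D}" by (rule card_mono[rotated]) simp
    then show ?thesis by simp
  qed
  have StM: "St \<subseteq> M"
  proof
    fix C assume "C \<in> St"
    then have "g C = C" using stab unfolding g_def by auto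
    moreover have "C \<in> Q" using \<open>C \<in> St\<close> St unfolding Q_def by auto
    moreover have "g C \<in> g ` Q" using \<open>C \<in> Q\<close> by (rule imageI)
    ultimately show "C \<in> M" using gQ by simp
  qed
  have cSt: "card St = (\<Sum>D\<in>M. if D \<in> St then 1 else 0)"
  proof -
    have e: "{x\<in>M. x\<in>St} = St" using StM by blast
    show ?thesis using finM by (simp add: sum.If_cases Int_def e)
  qed
  have "card Q + card St = (\<Sum>D\<in>M. card (fib D) + (if D \<in> St then 1 else 0))"
    unfolding cardQ cSt by (simp add: sum.distrib)
  also have "\<dots> \<le> (\<Sum>D\<in>M. 2)"
  proof (rule sum_mono)
    fix D assume "D \<in> M"
    show "card (fib D) + (if D \<in> St then 1 else 0) \<le> 2"
      using fib1[of D] fib2[OF \<open>D \<in> M\<close>] by (cases "D \<in> St") auto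
  qed
  also have "\<dots> = 2 * card M" by simp
  finally show ?thesis unfolding Q_def M_def T_def .
qed



lemma comps_cls:
  assumes "\<forall>e\<in>edges H. inc H e \<subseteq> verts H"
  shows "components H = cls (verts H) (adjR H (edges H))"
  unfolding components_def cls_def
proof (rule image_cong[OF refl])
  fix u assume u: "u \<in> verts H"
  have "(adjR H (edges H))\<^sup>* `` {u} \<subseteq> verts H"
    by (rule cls_sub[OF adjR_sub u]) (use assms in auto)
  then show "{v \<in> verts H. joined H u v} = (adjR H (edges H))\<^sup>* `` {u}"
    using joined_iff[OF assms] u by auto
qed

lemma orbit_count:
  assumes fin: "finite X" and f: "\<And>x. x \<in> X \<Longrightarrow> f x \<in> X \<and> f (f x) = x \<and> f x \<noteq> x"
  shows "card X = 2 * card ((\<lambda>x. {x, f x}) ` X)"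
proof -
  define Orb where "Orb = (\<lambda>x. {x, f x}) ` X"
  have U: "\<Union>Orb = X" unfolding Orb_def using f by blast
  have pw: "pairwise disjnt Orb"
  proof (rule pairwiseI)
    fix A B assume A: "A \<in> Orb" and B: "B \<in> Orb" and ne: "A \<noteq> B"
    from A obtain x where x: "x \<in> X" "A = {x, f x}" unfolding Orb_def by auto
    from B obtain y where y: "y \<in> X" "B = {y, f y}" unfolding Orb_def by auto
    have fx: "f (f x) = x" "f (f y) = y" using f x(1) y(1) by auto
    show "disjnt A B"
    proof (rule ccontr)
      assume "\<not> disjnt A B"
      then obtain z where "z \<in> A" "z \<in> B" unfolding disjnt_def by auto
      then have "(z = x \<or> z = f x) \<and> (z = y \<or> z = f y)" using x y by auto
      then have "x = y \<or> x = f y" using fx by metis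
      then have "A = B"
      proof
        assume "x = y" then show ?thesis using x(2) y(2) by simp
      next
        assume "x = f y" then have "f x = y" using fx by simp
        then show ?thesis using x(2) y(2) \<open>x = f y\<close> by (simp add: doubleton_eq_iff)
      qed
      then show False using ne by simp
    qed
  qed
  have c2: "card A = 2" if "A \<in> Orb" for A
  proof -
    from that obtain x where "x \<in> X" "A = {x, f x}" unfolding Orb_def by auto
    then show ?thesis using f[of x] by (auto simp: card_insert_if)
  qed
  have finO: "finite Orb" unfolding Orb_def using fin by simp
  have "card X = sum card Orb"
    unfolding U[symmetric] by (rule card_Union_disjoint[OF pw]) (use U fin in \<open>auto intro: finite_subset\<close>)
  also have "\<dots> = sum (\<lambda>_. 2) Orb" using c2 by (rule sum.cong[OF refl])
  also have "\<dots> = 2 * card Orb" by simp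
  finally show ?thesis unfolding Orb_def .
qed



lemma adjR_inc: "inc H = inc G \<Longrightarrow> adjR H F = adjR G F"
  unfolding adjR_def by simp


locale RG =
  fixes G :: "('v,'e) graph" and iV :: "'v \<Rightarrow> 'v" and iE :: "'e \<Rightarrow> 'e"
  assumes gr: "is_graph G" and con: "connected_graph G" and rs: "real_structure G iV iE"
begin

abbreviation "V \<equiv> verts G"
abbreviation "E \<equiv> edges G"
abbreviation "VR \<equiv> real_verts G iV"
abbreviation "ER \<equiv> {e\<in>edges G. iE e = e \<and> inc G e \<subseteq> real_verts G iV}"
abbreviation "RL \<equiv> real_locus G iV iE"
abbreviation "AR \<equiv> adjR G {e\<in>edges G. iE e = e \<and> inc G e \<subseteq> real_verts G iV}"

lemma finV: "finite V" using gr unfolding is_graph_def by simp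
lemma finE: "finite E" using gr unfolding is_graph_def by simp
lemma incV: "e \<in> E \<Longrightarrow> inc G e \<subseteq> V" using gr unfolding is_graph_def by simp
lemma inc12: "e \<in> E \<Longrightarrow> card (inc G e) = 1 \<or> card (inc G e) = 2" using gr unfolding is_graph_def by simp
lemma inc_ne: "e \<in> E \<Longrightarrow> inc G e \<noteq> {}" using inc12 by fastforce
lemma iVV: "x \<in> V \<Longrightarrow> iV x \<in> V" using rs unfolding real_structure_def by simp
lemma iVi: "x \<in> V \<Longrightarrow> iV (iV x) = x" using rs unfolding real_structure_def by simp
lemma iEE: "e \<in> E \<Longrightarrow> iE e \<in> E" using rs unfolding real_structure_def by simp
lemma iEi: "e \<in> E \<Longrightarrow> iE (iE e) = e" using rs unfolding real_structure_def by simp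
lemma incI: "e \<in> E \<Longrightarrow> inc G (iE e) = iV ` inc G e" using rs unfolding real_structure_def by simp
lemma VR_sub: "VR \<subseteq> V" unfolding real_verts_def by auto
lemma VR_iff: "x \<in> VR \<longleftrightarrow> x \<in> V \<and> iV x = x" unfolding real_verts_def by auto
lemma finVR: "finite VR" using finV VR_sub by (rule finite_subset[rotated])

lemma RL_simps: "verts RL = VR" "edges RL = ER" "inc RL = inc G"
  unfolding real_locus_def by simp_all

lemma AR_sub: "AR \<subseteq> VR \<times> VR" by (rule adjR_sub) auto

lemma compsRL: "components RL = (\<lambda>u. AR\<^sup>* `` {u}) ` VR"
proof -
  have "components RL = cls (verts RL) (adjR RL (edges RL))"
    by (rule comps_cls) (auto simp: RL_simps)
  then show ?thesis unfolding cls_def RL_simps adjR_inc[OF RL_simps(3)] .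
qed

lemma AR_real: "u \<in> VR \<Longrightarrow> AR\<^sup>* `` {u} \<subseteq> VR"
  by (rule cls_sub[OF AR_sub])

lemma AR_nonreal: assumes "u \<notin> VR" shows "AR\<^sup>* `` {u} = {u}"
proof -
  have "w = u" if "(u,w) \<in> AR\<^sup>*" for w
    using that
  proof (cases rule: converse_rtranclE)
    case (step y) then show ?thesis using AR_sub assms by auto
  qed simp
  then show ?thesis by auto
qed

lemma finite_compsRL: "finite (components RL)" unfolding compsRL using finVR by simp

definition EC :: "'v set \<Rightarrow> 'e set" where
  "EC C = {e\<in>edges G. iE e = e \<and> inc G e \<subseteq> real_verts G iV \<and> inc G e \<subseteq> C}"

lemma comp_sub_simps: "verts (comp_subgraph RL C) = C" "edges (comp_subgraph RL C) = EC C"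
  "inc (comp_subgraph RL C) = inc G"
  unfolding comp_subgraph_def EC_def RL_simps by auto

lemma genus_comp:
  assumes C: "C \<in> components RL"
  shows "genus (comp_subgraph RL C) = 1 + int (card (EC C)) - int (card C)"
proof -
  obtain u0 where u0: "u0 \<in> VR" "C = AR\<^sup>* `` {u0}" using C compsRL by auto
  have sAR: "sym AR" by (rule sym_adjR)
  define AC where "AC = adjR G (EC C)"
  have ACsub: "AC \<subseteq> C \<times> C" unfolding AC_def by (rule adjR_sub) (auto simp: EC_def)
  have AR_AC: "(u,w) \<in> AC\<^sup>*" if u: "u \<in> C" and uw: "(u,w) \<in> AR\<^sup>*" for u w
    using uw
  proof (induction rule: rtrancl_induct)
    case base then show ?case by simp
  next
    case (step y z)
    have "(u0,u) \<in> AR\<^sup>*" using u u0 by simp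
    then have "(u0,y) \<in> AR\<^sup>*" using step(1) by (rule rtrancl_trans)
    then have yz: "y \<in> C" "z \<in> C" using step(2) u0(2) by (auto intro: rtrancl_into_rtrancl)
    from step(2) obtain e where e: "e \<in> ER" "inc G e = {y,z}" unfolding adjR_def by auto
    then have "e \<in> EC C" using yz unfolding EC_def by auto
    then have "(y,z) \<in> AC" using e(2) unfolding AC_def adjR_def by auto
    with step.IH show ?case by (rule rtrancl_into_rtrancl)
  qed
  have cl: "AC\<^sup>* `` {u} = C" if u: "u \<in> C" for u
  proof
    show "AC\<^sup>* `` {u} \<subseteq> C" by (rule cls_sub[OF ACsub u])
  next
    show "C \<subseteq> AC\<^sup>* `` {u}"
    proof
      fix w assume w: "w \<in> C"
      have "(u0,u) \<in> AR\<^sup>*" "(u0,w) \<in> AR\<^sup>*" using u w u0 by auto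
      then have "(u,u0) \<in> AR\<^sup>*" using symD[OF sym_rtrancl[OF sAR]] by simp
      then have "(u,w) \<in> AR\<^sup>*" using \<open>(u0,w) \<in> AR\<^sup>*\<close> by (rule rtrancl_trans)
      then show "w \<in> AC\<^sup>* `` {u}" using AR_AC[OF u] by simp
    qed
  qed
  have u0C: "u0 \<in> C" using u0 by simp
  have "components (comp_subgraph RL C) = cls C AC"
    using comps_cls[of "comp_subgraph RL C"] adjR_inc[OF comp_sub_simps(3)]
    unfolding comp_sub_simps AC_def by (auto simp: EC_def)
  also have "\<dots> = {C}" unfolding cls_def using cl u0C by auto
  finally show ?thesis unfolding genus_def comp_sub_simps by simp
qed

end



context RG begin

lemma compsRL_sub: "C \<in> components RL \<Longrightarrow> C \<subseteq> VR"
  using compsRL AR_real by auto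

lemma compsRL_meet: "C1 \<in> components RL \<Longrightarrow> C2 \<in> components RL \<Longrightarrow> x \<in> C1 \<Longrightarrow> x \<in> C2 \<Longrightarrow> C1 = C2"
proof -
  assume C: "C1 \<in> components RL" "C2 \<in> components RL" "x \<in> C1" "x \<in> C2"
  obtain u1 where u1: "C1 = AR\<^sup>* `` {u1}" using C(1) compsRL by auto
  obtain u2 where u2: "C2 = AR\<^sup>* `` {u2}" using C(2) compsRL by auto
  show "C1 = C2" unfolding u1 u2 by (rule cls_meet[OF sym_adjR, of x]) (use C u1 u2 in simp_all)
qed

lemma sum_card_comps: "(\<Sum>C\<in>components RL. card C) = card VR"
proof -
  have U: "\<Union>(components RL) = VR"
  proof
    show "\<Union>(components RL) \<subseteq> VR" using compsRL_sub by auto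
    show "VR \<subseteq> \<Union>(components RL)"
    proof
      fix u assume "u \<in> VR"
      then have "AR\<^sup>* `` {u} \<in> components RL" "u \<in> AR\<^sup>* `` {u}" using compsRL by auto
      then show "u \<in> \<Union>(components RL)" by blast
    qed
  qed
  have pw: "pairwise disjnt (components RL)"
    unfolding pairwise_def disjnt_def using compsRL_meet by blast
  have "card (\<Union>(components RL)) = sum card (components RL)"
    by (rule card_Union_disjoint[OF pw]) (use compsRL_sub finVR in \<open>auto intro: finite_subset\<close>)
  then show ?thesis using U by simp
qed

lemma sum_card_EC: "(\<Sum>C\<in>components RL. card (EC C)) = card ER"
proof -
  have U: "(\<Union>C\<in>components RL. EC C) = ER"
  proof
    show "(\<Union>C\<in>components RL. EC C) \<subseteq> ER" unfolding EC_def by auto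
    show "ER \<subseteq> (\<Union>C\<in>components RL. EC C)"
    proof
      fix e assume e: "e \<in> ER"
      then obtain x y where xy: "inc G e = {x,y}" using two_ends inc12 by blast
      then have x: "x \<in> VR" using e by auto
      have "(x,y) \<in> AR" using e xy unfolding adjR_def by auto
      then have "inc G e \<subseteq> AR\<^sup>* `` {x}" using xy by auto
      then have "e \<in> EC (AR\<^sup>* `` {x})" using e unfolding EC_def by auto
      moreover have "AR\<^sup>* `` {x} \<in> components RL" using x compsRL by auto
      ultimately show "e \<in> (\<Union>C\<in>components RL. EC C)" by blast
    qed
  qed
  have "card (\<Union>C\<in>components RL. EC C) = (\<Sum>C\<in>components RL. card (EC C))"
  proof (rule card_UN_disjoint[OF finite_compsRL])
    show "\<forall>C\<in>components RL. finite (EC C)" using finE unfolding EC_def by auto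
    show "\<forall>C1\<in>components RL. \<forall>C2\<in>components RL. C1 \<noteq> C2 \<longrightarrow> EC C1 \<inter> EC C2 = {}"
    proof (intro ballI impI)
      fix C1 C2 assume C: "C1 \<in> components RL" "C2 \<in> components RL" "C1 \<noteq> C2"
      show "EC C1 \<inter> EC C2 = {}"
      proof (rule ccontr)
        assume "EC C1 \<inter> EC C2 \<noteq> {}"
        then obtain e where e: "e \<in> EC C1" "e \<in> EC C2" by auto
        then have "e \<in> E" unfolding EC_def by auto
        then obtain z where "z \<in> inc G e" using inc_ne by auto
        then have "z \<in> C1" "z \<in> C2" using e unfolding EC_def by auto
        then show False using compsRL_meet[OF C(1) C(2)] C(3) by blast
      qed
    qed
  qed
  then show ?thesis using U by simp
qed

abbreviation "Eiso \<equiv> isolated_real_edges G iV iE"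
abbreviation "sp \<equiv> card (components RL)"

lemma s_formula: "s_inv G iV iE = int (card Eiso) + int (card ER) + 2 * int sp - int (card VR)"
proof -
  have "(\<Sum>C\<in>components RL. genus (comp_subgraph RL C) + 1)
      = (\<Sum>C\<in>components RL. 2 + int (card (EC C)) - int (card C))"
    by (rule sum.cong[OF refl]) (simp add: genus_comp)
  also have "\<dots> = (\<Sum>C\<in>components RL. 2) + (\<Sum>C\<in>components RL. int (card (EC C))) - (\<Sum>C\<in>components RL. int (card C))"
    by (simp add: sum.distrib sum_subtractf)
  also have "\<dots> = 2 * int sp + int (card ER) - int (card VR)"
    using sum_card_EC sum_card_comps by (simp flip: of_nat_sum)
  finally show ?thesis unfolding s_inv_def by simp
qed

end


context RG begin

abbreviation "VN \<equiv> verts G - real_verts G iV"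
abbreviation "ENN \<equiv> {e\<in>edges G. iE e \<noteq> e \<and> inc G e \<inter> real_verts G iV = {}}"
abbreviation "ENX \<equiv> {e\<in>edges G. iE e \<noteq> e \<and> inc G e \<inter> real_verts G iV \<noteq> {}}"

lemma card_E: "card E = card Eiso + card ER + card ENN + card ENX"
proof -
  have U: "E = Eiso \<union> ER \<union> ENN \<union> ENX" unfolding isolated_real_edges_def by auto
  have f: "finite Eiso" "finite ER" "finite ENN" "finite ENX"
    using finE unfolding isolated_real_edges_def by auto
  have d: "Eiso \<inter> ER = {}" "(Eiso \<union> ER) \<inter> ENN = {}" "(Eiso \<union> ER \<union> ENN) \<inter> ENX = {}"
    unfolding isolated_real_edges_def using inc_ne by auto
  have "card (Eiso \<union> ER \<union> ENN \<union> ENX) = card (Eiso \<union> ER \<union> ENN) + card ENX"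
    by (rule card_Un_disjoint) (use f d in auto)
  also have "card (Eiso \<union> ER \<union> ENN) = card (Eiso \<union> ER) + card ENN"
    by (rule card_Un_disjoint) (use f d in auto)
  also have "card (Eiso \<union> ER) = card Eiso + card ER"
    by (rule card_Un_disjoint) (use f d in auto)
  finally show ?thesis using U by simp
qed

lemma card_V: "card V = card VR + card VN"
  using finV VR_sub by (metis card_Diff_subset card_mono finite_subset le_add_diff_inverse)

lemma cls_AR: "cls V AR = components RL \<union> (\<lambda>u. {u}) ` VN"
proof -
  have "V = VR \<union> VN" using VR_sub by auto
  then have "cls V AR = (\<lambda>u. AR\<^sup>* `` {u}) ` VR \<union> (\<lambda>u. AR\<^sup>* `` {u}) ` VN"
    unfolding cls_def by (metis image_Un)
  also have "(\<lambda>u. AR\<^sup>* `` {u}) ` VN = (\<lambda>u. {u}) ` VN"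
    by (rule image_cong[OF refl]) (simp add: AR_nonreal)
  finally show ?thesis using compsRL by simp
qed

lemma card_cls_AR: "card (cls V AR) = sp + card VN"
proof -
  have d: "components RL \<inter> (\<lambda>u. {u}) ` VN = {}" using compsRL_sub by auto
  have f: "finite ((\<lambda>u. {u}) ` VN)" using finV by simp
  have "card ((\<lambda>u. {u}) ` VN) = card VN" by (rule card_image) (simp add: inj_on_def)
  then show ?thesis unfolding cls_AR using card_Un_disjoint[OF finite_compsRL f d] by simp
qed

lemma edge_cond: "F \<subseteq> E \<Longrightarrow> \<forall>e\<in>F. inc G e \<subseteq> V \<and> (card (inc G e) = 1 \<or> card (inc G e) = 2)"
  using incV inc12 by auto

lemma card_cls_empty: "card (cls V {}) = card V"
proof -
  have "cls V {} = (\<lambda>u. {u}) ` V" unfolding cls_def by simp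
  moreover have "card ((\<lambda>u. {u}) ` V) = card V" by (rule card_image) (simp add: inj_on_def)
  ultimately show ?thesis by simp
qed

lemma ineq_real: "card VR \<le> sp + card ER"
proof -
  have "card (cls V {}) \<le> card (cls V ({} \<union> AR)) + card ER"
    by (rule cls_add_edges) (use finE finV edge_cond[of ER] in \<open>auto simp: sym_def\<close>)
  then show ?thesis using card_cls_empty card_cls_AR card_V by simp
qed

abbreviation "RR \<equiv> adjR G ({e\<in>edges G. iE e = e \<and> inc G e \<subseteq> real_verts G iV} \<union> {e\<in>edges G. iE e \<noteq> e \<and> inc G e \<inter> real_verts G iV = {}})"

lemma RR_sub: "RR \<subseteq> V \<times> V" by (rule adjR_sub) (use incV in auto)

lemma ineq_Q: "sp + card VN \<le> card (cls V RR) + card ENN"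
proof -
  have "card (cls V AR) \<le> card (cls V (AR \<union> adjR G ENN)) + card ENN"
    by (rule cls_add_edges) (use finE finV edge_cond[of ENN] AR_sub VR_sub sym_adjR in auto)
  then show ?thesis using card_cls_AR adjR_Un by metis
qed

end


context RG begin

lemma RR_real: assumes u: "u \<in> VR" and uw: "(u,w) \<in> RR\<^sup>*" shows "(u,w) \<in> AR\<^sup>*"
  using uw
proof (induction rule: rtrancl_induct)
  case base then show ?case by simp
next
  case (step y z)
  have y: "y \<in> VR" using AR_real[OF u] step.IH by auto
  from step(2) obtain e where e: "e \<in> ER \<union> ENN" "inc G e = {y,z}" unfolding adjR_def by auto
  then have "e \<in> ER" using y by auto
  then have "(y,z) \<in> AR" using e(2) unfolding adjR_def by auto
  with step.IH show ?case by (rule rtrancl_into_rtrancl)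
qed

lemma AR_RR: "AR \<subseteq> RR" by (rule adjR_mono) auto

lemma RR_cls_real: "u \<in> VR \<Longrightarrow> RR\<^sup>* `` {u} = AR\<^sup>* `` {u}"
  using RR_real rtrancl_mono[OF AR_RR] by auto

lemma comps_sub_Q: "components RL \<subseteq> cls V RR"
proof
  fix C assume "C \<in> components RL"
  then obtain u where u: "u \<in> VR" "C = AR\<^sup>* `` {u}" using compsRL by auto
  then have "C = RR\<^sup>* `` {u}" using RR_cls_real by simp
  then show "C \<in> cls V RR" unfolding cls_def using u VR_sub by auto
qed

lemma comps_stable: "C \<in> components RL \<Longrightarrow> iV ` C = C"
proof -
  assume "C \<in> components RL"
  then have "C \<subseteq> VR" by (rule compsRL_sub)
  then have "\<forall>x\<in>C. iV x = x" using VR_iff by auto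
  then show "iV ` C = C" by force
qed

lemma ENN_inv: "e \<in> ENN \<Longrightarrow> iE e \<in> ENN"
proof -
  assume e: "e \<in> ENN"
  have eE: "e \<in> E" using e by simp
  have "iE (iE e) \<noteq> iE e" using iEi[OF eE] e by auto
  moreover have "inc G (iE e) \<inter> VR = {}"
  proof (rule ccontr)
    assume "inc G (iE e) \<inter> VR \<noteq> {}"
    then obtain z where z: "z \<in> inc G e" "iV z \<in> VR" using incI[OF eE] by auto
    have zV: "z \<in> V" using z(1) incV[OF eE] by auto
    have "iV (iV z) = iV z" using z(2) VR_iff by simp
    then have "iV z = z" using iVi[OF zV] by simp
    then have "z \<in> VR" using zV VR_iff by simp
    then show False using z(1) e by auto
  qed
  ultimately show "iE e \<in> ENN" using iEE[OF eE] by simp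
qed

lemma ENX_inv: "e \<in> ENX \<Longrightarrow> iE e \<in> ENX"
proof -
  assume e: "e \<in> ENX"
  have eE: "e \<in> E" using e by simp
  have "iE (iE e) \<noteq> iE e" using iEi[OF eE] e by auto
  moreover have "inc G (iE e) \<inter> VR \<noteq> {}"
  proof -
    obtain z where z: "z \<in> inc G e" "z \<in> VR" using e by auto
    then have "iV z = z" using VR_iff by simp
    then have "z \<in> inc G (iE e)" using incI[OF eE] z(1) by force
    then show ?thesis using z(2) by auto
  qed
  ultimately show "iE e \<in> ENX" using iEE[OF eE] by simp
qed

lemma RR_inv: "(x,y) \<in> RR \<Longrightarrow> (iV x, iV y) \<in> RR"
proof -
  assume "(x,y) \<in> RR"
  then obtain e where e: "e \<in> ER \<union> ENN" "inc G e = {x,y}" unfolding adjR_def by auto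
  show "(iV x, iV y) \<in> RR"
  proof (cases "e \<in> ER")
    case True
    then have "x \<in> VR" "y \<in> VR" using e(2) by auto
    then have "iV x = x" "iV y = y" using VR_iff by auto
    then show ?thesis using \<open>(x,y) \<in> RR\<close> by simp
  next
    case False
    then have eN: "e \<in> ENN" using e(1) by blast
    then have "iE e \<in> ENN" by (rule ENN_inv)
    moreover have "inc G (iE e) = {iV x, iV y}" using incI[of e] eN e(2) by simp
    ultimately show ?thesis unfolding adjR_def by blast
  qed
qed

lemma orbit_applied:
  assumes "St \<subseteq> cls V RR" "\<And>C. C \<in> St \<Longrightarrow> iV ` C = C"
  shows "card (cls V RR) + card St \<le> 2 * card (cls V (RR \<union> {(x, iV x) | x. x \<in> V}))"
  by (rule cls_orbit[OF finV RR_sub sym_adjR _ RR_inv assms]) (use iVV iVi in auto)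

end


context RG begin

abbreviation "TT \<equiv> {(x, iV x) | x. x \<in> verts G}"

lemma TT_sub: "TT \<subseteq> V \<times> V" using iVV by auto

lemma TT_sym: "sym TT"
proof (rule symI)
  fix a b assume "(a,b) \<in> TT"
  then have "b = iV a" "a \<in> V" by auto
  then show "(b,a) \<in> TT" using iVV iVi by force
qed

lemma final_M: "card (cls V (RR \<union> TT)) \<le> 1 + card ((\<lambda>e. {e, iE e}) ` ENX)"
proof -
  define Orb where "Orb = (\<lambda>e. {e, iE e}) ` ENX"
  define rep where "rep X = (SOME e. e \<in> X)" for X :: "'e set"
  define Frep where "Frep = rep ` Orb"
  have rep_in: "rep {e, iE e} \<in> {e, iE e}" for e unfolding rep_def by (rule someI[of _ e]) simp
  have Frep_sub: "Frep \<subseteq> ENX"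
  proof
    fix f assume "f \<in> Frep"
    then obtain e where e: "e \<in> ENX" "f = rep {e, iE e}" unfolding Frep_def Orb_def by auto
    then have "f = e \<or> f = iE e" using rep_in[of e] by auto
    then show "f \<in> ENX" using e(1) ENX_inv by auto
  qed
  have Frep_cover: "e \<in> Frep \<or> iE e \<in> Frep" if "e \<in> ENX" for e
  proof -
    have "rep {e, iE e} \<in> Frep" unfolding Frep_def Orb_def using that by auto
    then show ?thesis using rep_in[of e] by auto
  qed
  have finOrb: "finite Orb" unfolding Orb_def using finE by simp
  have cardF: "card Frep \<le> card Orb" unfolding Frep_def by (rule card_image_le[OF finOrb])
  have finF: "finite Frep" unfolding Frep_def using finOrb by simp
  define X where "X = RR \<union> TT \<union> adjR G Frep"
  have step1: "card (cls V (RR \<union> TT)) \<le> card (cls V X) + card Frep"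
    unfolding X_def
  proof (rule cls_add_edges[OF finF finV])
    show "RR \<union> TT \<subseteq> V \<times> V" using RR_sub TT_sub by auto
    show "sym (RR \<union> TT)" by (rule sym_Un[OF sym_adjR TT_sym])
    have "Frep \<subseteq> E" using Frep_sub by auto
    then show "\<forall>e\<in>Frep. inc G e \<subseteq> V \<and> (card (inc G e) = 1 \<or> card (inc G e) = 2)" by (rule edge_cond)
  qed
  have "\<forall>e\<in>Frep. inc G e \<subseteq> V" using Frep_sub incV by blast
  then have "adjR G Frep \<subseteq> V \<times> V" by (rule adjR_sub)
  then have XV: "X \<subseteq> V \<times> V" unfolding X_def using RR_sub TT_sub by auto
  have TX: "(x, iV x) \<in> X\<^sup>*" "(iV x, x) \<in> X\<^sup>*" if "x \<in> V" for x
  proof -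
    have "(x, iV x) \<in> X" unfolding X_def using that by auto
    moreover have "(iV x, x) \<in> X" unfolding X_def using that iVV iVi by force
    ultimately show "(x, iV x) \<in> X\<^sup>*" "(iV x, x) \<in> X\<^sup>*" by auto
  qed
  have adjE: "adjR G E \<subseteq> X\<^sup>*"
  proof
    fix p assume "p \<in> adjR G E"
    then obtain x y e where p: "p = (x,y)" and e: "e \<in> E" "inc G e = {x,y}" unfolding adjR_def by auto
    have xyV: "x \<in> V" "y \<in> V" using incV[OF e(1)] e(2) by auto
    have "(x,y) \<in> X\<^sup>*"
    proof (cases "iE e = e")
      case True
      show ?thesis
      proof (cases "inc G e \<subseteq> VR")
        case True
        then have "(x,y) \<in> RR" using e \<open>iE e = e\<close> unfolding adjR_def by blast
        then show ?thesis unfolding X_def by auto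
      next
        case False
        have inv: "{iV x, iV y} = {x,y}" using incI[OF e(1)] e(2) \<open>iE e = e\<close> by simp
        have "y = iV x"
        proof (cases "x \<in> VR")
          case False
          then have "iV x \<noteq> x" using VR_iff xyV by simp
          then show ?thesis using inv by (auto simp: doubleton_eq_iff)
        next
          case True
          then have "y \<notin> VR" using \<open>\<not> inc G e \<subseteq> VR\<close> e(2) by auto
          then have "iV y \<noteq> y" using VR_iff xyV by simp
          then have "iV y = x" using inv by (auto simp: doubleton_eq_iff)
          then show ?thesis using iVi[OF xyV(2)] by simp
        qed
        then show ?thesis using TX[OF xyV(1)] by simp
      qed
    next
      case False
      show ?thesis
      proof (cases "inc G e \<inter> VR = {}")
        case True
        then have "(x,y) \<in> RR" using e \<open>iE e \<noteq> e\<close> unfolding adjR_def by blast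
        then show ?thesis unfolding X_def by auto
      next
        case nf: False
        then have eX: "e \<in> ENX" using e(1) \<open>iE e \<noteq> e\<close> by simp
        from Frep_cover[OF eX] show ?thesis
        proof
          assume "e \<in> Frep"
          then have "(x,y) \<in> adjR G Frep" using e(2) unfolding adjR_def by blast
          then show ?thesis unfolding X_def by auto
        next
          assume "iE e \<in> Frep"
          moreover have "inc G (iE e) = {iV x, iV y}" using incI[OF e(1)] e(2) by simp
          ultimately have "(iV x, iV y) \<in> adjR G Frep" unfolding adjR_def by blast
          then have m: "(iV x, iV y) \<in> X\<^sup>*" unfolding X_def by auto
          have "(x, iV y) \<in> X\<^sup>*" using TX(1)[OF xyV(1)] m by (rule rtrancl_trans)
          then show ?thesis using TX(2)[OF xyV(2)] by (rule rtrancl_trans)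
        qed
      qed
    qed
    then show "p \<in> X\<^sup>*" using p by simp
  qed
  have all: "(u,w) \<in> X\<^sup>*" if "u \<in> V" "w \<in> V" for u w
  proof -
    have "joined G u w" using con that unfolding connected_graph_def by auto
    then have "(u,w) \<in> (adjR G E)\<^sup>*" using joined_iff[of G] incV by auto
    then show ?thesis using rtrancl_subset_rtrancl[OF adjE] by auto
  qed
  have Vne: "V \<noteq> {}" using con unfolding connected_graph_def by simp
  have "cls V X = {V}"
  proof -
    have "X\<^sup>* `` {u} = V" if "u \<in> V" for u
      using cls_sub[OF XV that] all[OF that] by auto
    then have "cls V X = (\<lambda>u. V) ` V" unfolding cls_def by (rule image_cong[OF refl])
    then show ?thesis using Vne by auto
  qed
  then have "card (cls V X) = 1" by simp
  then show ?thesis using step1 cardF unfolding Orb_def by linarith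
qed

lemma card_ENX: "card ENX = 2 * card ((\<lambda>e. {e, iE e}) ` ENX)"
  by (rule orbit_count) (use finE ENX_inv iEi in auto)

lemma even_ENN: "card ENN = 2 * card ((\<lambda>e. {e, iE e}) ` ENN)"
  by (rule orbit_count) (use finE ENN_inv iEi in auto)

lemma VN_inv: "x \<in> VN \<Longrightarrow> iV x \<in> VN \<and> iV (iV x) = x \<and> iV x \<noteq> x"
proof -
  assume x: "x \<in> VN"
  then have xV: "x \<in> V" and nx: "iV x \<noteq> x" using VR_iff by auto
  have "iV x \<notin> VR"
  proof
    assume "iV x \<in> VR" then have "iV (iV x) = iV x" using VR_iff by simp
    then show False using iVi[OF xV] nx by simp
  qed
  then show ?thesis using iVV[OF xV] iVi[OF xV] nx by simp
qed

lemma even_VN: "card VN = 2 * card ((\<lambda>x. {x, iV x}) ` VN)"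
  by (rule orbit_count) (use finV VN_inv in auto)

end


context RG begin

lemma a_stable:
  assumes "a_inv G iV iE = 1"
  shows "\<exists>K. K \<in> cls V RR \<and> iV ` K = K \<and> K \<notin> components RL"
proof -
  from assms obtain v vs es where v: "v \<in> V" "iV v \<noteq> v" and w: "is_walk G vs es" "hd vs = v" "last vs = iV v"
    and nr: "\<forall>u\<in>set vs. iV u \<noteq> u" "\<forall>e\<in>set es. iE e \<noteq> e"
    unfolding a_inv_def by (auto split: if_splits)
  have esN: "set es \<subseteq> ENN"
  proof
    fix e assume "e \<in> set es"
    then obtain i where i: "i < length es" "e = es ! i" by (auto simp: in_set_conv_nth)
    have len: "length vs = Suc (length es)" using w(1) unfolding is_walk_def by simp
    have ie: "inc G e = {vs ! i, vs ! Suc i}" using w(1) i unfolding is_walk_def by simp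
    have "vs ! i \<in> set vs" "vs ! Suc i \<in> set vs" using i len by auto
    then have "vs ! i \<notin> VR" "vs ! Suc i \<notin> VR" using nr(1) VR_iff by auto
    then have "inc G e \<inter> VR = {}" using ie by auto
    moreover have "e \<in> E" using w(1) \<open>e \<in> set es\<close> unfolding is_walk_def by auto
    ultimately show "e \<in> ENN" using nr(2) \<open>e \<in> set es\<close> by auto
  qed
  have "(v, iV v) \<in> (adjR G (set es))\<^sup>*" using walk_adj[OF w(1)] w(2,3) by simp
  moreover have "adjR G (set es) \<subseteq> RR" by (rule adjR_mono) (use esN in auto)
  ultimately have vv: "(v, iV v) \<in> RR\<^sup>*" using rtrancl_mono by blast
  define K where "K = RR\<^sup>* `` {v}"
  have invRR: "(iV x, iV y) \<in> RR\<^sup>*" if "(x,y) \<in> RR\<^sup>*" for x y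
    using inv_rtrancl[of RR iV, OF RR_inv that] .
  have KV: "K \<subseteq> V" unfolding K_def by (rule cls_sub[OF RR_sub v(1)])
  have "iV ` K = K"
  proof
    show "iV ` K \<subseteq> K"
    proof
      fix z assume "z \<in> iV ` K"
      then obtain w where w: "(v,w) \<in> RR\<^sup>*" "z = iV w" unfolding K_def by auto
      have "(iV v, iV w) \<in> RR\<^sup>*" using invRR[OF w(1)] .
      then have "(v, iV w) \<in> RR\<^sup>*" using vv by (rule rtrancl_trans[rotated])
      then show "z \<in> K" unfolding K_def using w(2) by simp
    qed
  next
    show "K \<subseteq> iV ` K"
    proof
      fix w assume wK: "w \<in> K"
      then have "(v,w) \<in> RR\<^sup>*" unfolding K_def by simp
      have "(iV v, iV w) \<in> RR\<^sup>*" using invRR[OF \<open>(v,w) \<in> RR\<^sup>*\<close>] .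
      then have "(v, iV w) \<in> RR\<^sup>*" using vv by (rule rtrancl_trans[rotated])
      then have "iV w \<in> K" unfolding K_def by simp
      moreover have "w = iV (iV w)" using iVi wK KV by auto
      ultimately show "w \<in> iV ` K" by blast
    qed
  qed
  moreover have "K \<in> cls V RR" unfolding K_def cls_def using v(1) by auto
  moreover have "K \<notin> components RL"
  proof
    assume "K \<in> components RL"
    then have "K \<subseteq> VR" by (rule compsRL_sub)
    moreover have "v \<in> K" unfolding K_def by simp
    ultimately show False using v VR_iff by auto
  qed
  ultimately show ?thesis by blast
qed

lemma harnack: "2 * sp + card VN + a_inv G iV iE \<le> card ENN + card ENX + 2"
proof -
  obtain St where St: "St \<subseteq> cls V RR" "\<And>C. C \<in> St \<Longrightarrow> iV ` C = C" "card St = sp + a_inv G iV iE"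
  proof (cases "a_inv G iV iE = 1")
    case True
    then obtain K where K: "K \<in> cls V RR" "iV ` K = K" "K \<notin> components RL" using a_stable by blast
    show ?thesis
    proof (rule that[of "insert K (components RL)"])
      show "insert K (components RL) \<subseteq> cls V RR" using K comps_sub_Q by auto
      show "iV ` C = C" if "C \<in> insert K (components RL)" for C
      proof -
        from that have "C = K \<or> C \<in> components RL" by simp
        then show ?thesis using K(2) comps_stable by blast
      qed
      show "card (insert K (components RL)) = sp + a_inv G iV iE"
        using True K(3) finite_compsRL by simp
    qed
  next
    case False
    then have "a_inv G iV iE = 0" unfolding a_inv_def by (auto split: if_splits)
    then show ?thesis using that[of "components RL"] comps_sub_Q comps_stable by auto
  qed
  have o: "card (cls V RR) + card St \<le> 2 * card (cls V (RR \<union> TT))" by (rule orbit_applied[OF St(1,2)])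
  have f: "card (cls V (RR \<union> TT)) \<le> 1 + card ((\<lambda>e. {e, iE e}) ` ENX)" by (rule final_M)
  show ?thesis using o f card_ENX ineq_Q St(3) by linarith
qed

lemma s_zero:
  assumes a0: "a_inv G iV iE = 0" shows "s_inv G iV iE \<noteq> 0"
proof
  assume s0: "s_inv G iV iE = 0"
  have "card Eiso = 0" "sp = 0" using s0 s_formula ineq_real by linarith+
  have finIso: "finite Eiso" using finE unfolding isolated_real_edges_def by auto
  then have Iso0: "Eiso = {}" using \<open>card Eiso = 0\<close> by simp
  have "components RL = {}" using \<open>sp = 0\<close> finite_compsRL by simp
  then have VR0: "VR = {}" using compsRL by simp
  obtain v where v: "v \<in> V" using con unfolding connected_graph_def by auto
  have nv: "iV v \<noteq> v" using v VR0 VR_iff by auto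
  have "joined G v (iV v)" using con v iVV unfolding connected_graph_def by auto
  then obtain vs es where w: "is_walk G vs es" "hd vs = v" "last vs = iV v" unfolding joined_def by auto
  have "\<forall>u\<in>set vs. iV u \<noteq> u"
  proof
    fix u assume "u \<in> set vs" then have "u \<in> V" using w(1) unfolding is_walk_def by auto
    then show "iV u \<noteq> u" using VR0 VR_iff by auto
  qed
  moreover have "\<forall>e\<in>set es. iE e \<noteq> e"
  proof
    fix e assume "e \<in> set es" then have eE: "e \<in> E" using w(1) unfolding is_walk_def by auto
    show "iE e \<noteq> e"
    proof
      assume "iE e = e"
      then have "e \<in> Eiso" using eE inc_ne[OF eE] VR0 unfolding isolated_real_edges_def by auto
      then show False using Iso0 by simp
    qed
  qed
  ultimately have "a_inv G iV iE = 1" unfolding a_inv_def using v nv w by auto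
  then show False using a0 by simp
qed

lemma genus_G: "genus G = 1 + int (card E) - int (card V)"
proof -
  have "components G = (\<lambda>u. V) ` V" unfolding components_def
    by (rule image_cong[OF refl]) (use con in \<open>auto simp: connected_graph_def\<close>)
  then have "components G = {V}" using con unfolding connected_graph_def by auto
  then show ?thesis unfolding genus_def by simp
qed

lemma main: "s_inv G iV iE mod 2 = (genus G + 1) mod 2
     \<and> 0 \<le> s_inv G iV iE \<and> s_inv G iV iE \<le> genus G + 1
     \<and> (a_inv G iV iE = 1 \<longrightarrow> s_inv G iV iE \<noteq> genus G + 1)
     \<and> (a_inv G iV iE = 0 \<longrightarrow> s_inv G iV iE \<noteq> 0)"
proof -
  obtain p q r where pqr: "card ENN = 2 * p" "card ENX = 2 * q" "card VN = 2 * r"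
    using even_ENN card_ENX even_VN by blast
  have h: "2 * sp + card VN + a_inv G iV iE \<le> card ENN + card ENX + 2" by (rule harnack)
  have g: "genus G + 1 = s_inv G iV iE + 2 * (1 + int p + int q - int r - int sp)"
    using genus_G s_formula card_E card_V pqr by simp
  have s0: "0 \<le> s_inv G iV iE" using s_formula ineq_real by simp
  have nh: "2 * sp + 2 * r + a_inv G iV iE \<le> 2 * p + 2 * q + 2" using h pqr by simp
  have d: "int (a_inv G iV iE) \<le> 2 * (1 + int p + int q - int r - int sp)" 
  proof -
    have "int (2 * sp + 2 * r + a_inv G iV iE) \<le> int (2 * p + 2 * q + 2)" using nh by (simp only: of_nat_le_iff)
    then show ?thesis by simp
  qed
  have a1: "a_inv G iV iE = 1 \<longrightarrow> s_inv G iV iE \<noteq> genus G + 1" using d g by auto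
  have m: "(genus G + 1) mod 2 = s_inv G iV iE mod 2" unfolding g by presburger
  show ?thesis using g s0 d a1 s_zero m by auto
qed

end

theorem theorem1:
  fixes G :: "('v, 'e) graph" and iV :: "'v \<Rightarrow> 'v" and iE :: "'e \<Rightarrow> 'e"
  assumes "is_graph G" and "connected_graph G" and "real_structure G iV iE"
  shows "s_inv G iV iE mod 2 = (genus G + 1) mod 2
     \<and> 0 \<le> s_inv G iV iE \<and> s_inv G iV iE \<le> genus G + 1
     \<and> (a_inv G iV iE = 1 \<longrightarrow> s_inv G iV iE \<noteq> genus G + 1)
     \<and> (a_inv G iV iE = 0 \<longrightarrow> s_inv G iV iE \<noteq> 0)"
proof -
  interpret RG G iV iE using assms by unfold_locales
  show ?thesis by (rule main)
qed


end
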